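(* Let $G=(V,E)$ be an unweighted $n$-vertex graph with girth $g$. Consider a non-contractive embedding of $G$ into a tree $T$. If an edge $e\in E$ is chosen uniformly at random, then $\Pr[d_T(e)\ge g/3-1]\ge(|E|-(n-1))/|E|$.
   Context: $G$ induces the shortest-path metric $d_G$ with unit edge lengths. An embedding into a tree $T$ maps $V$ into the vertices of an edge-weighted tree with shortest-path metric $d_T$; non-contractive means $d_T(x,y)\ge d_G(x,y)$ for all $x,y$, in particular $d_T(e)\ge1$ for each edge. For $e=(x,y)$, $d_T(e)$ denotes the $T$-distance between the images of $x$ and $y$. *)

theory Defs
  imports "HOL-Probability.Probability"
begin

definition simple_graph :: "'a set \<Rightarrow> 'a set set \<Rightarrow> bool" where
  "simple_graph V E \<longleftrightarrow> finite V \<and>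
     (\<forall>e\<in>E. \<exists>x y. x \<noteq> y \<and> x \<in> V \<and> y \<in> V \<and> e = {x, y})"

definition walk :: "'a set set \<Rightarrow> 'a list \<Rightarrow> bool" where
  "walk E xs \<longleftrightarrow> xs \<noteq> [] \<and> (\<forall>i. Suc i < length xs \<longrightarrow> {xs ! i, xs ! Suc i} \<in> E)"

text \<open>A cycle: at least 3 distinct vertices, consecutive ones adjacent, last adjacent to first.
  Its length is the number of vertices (= number of edges).\<close>
definition cycle :: "'a set set \<Rightarrow> 'a list \<Rightarrow> bool" where
  "cycle E xs \<longleftrightarrow> length xs \<ge> 3 \<and> distinct xs \<and> walk E xs \<and> {last xs, hd xs} \<in> E"

text \<open>Girth: length of a shortest cycle (infinite if the graph is acyclic).\<close>
definition girth :: "'a set \<Rightarrow> 'a set set \<Rightarrow> enat" where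
  "girth V E = Inf {enat (length xs) | xs. cycle E xs \<and> set xs \<subseteq> V}"

text \<open>Unweighted shortest-path metric d_G (infinite between different components).\<close>
definition graph_dist :: "'a set \<Rightarrow> 'a set set \<Rightarrow> 'a \<Rightarrow> 'a \<Rightarrow> enat" where
  "graph_dist V E x y = Inf {enat (length xs - 1) | xs.
      walk E xs \<and> set xs \<subseteq> V \<and> hd xs = x \<and> last xs = y}"

definition connected_graph :: "'a set \<Rightarrow> 'a set set \<Rightarrow> bool" where
  "connected_graph V E \<longleftrightarrow> (\<forall>x\<in>V. \<forall>y\<in>V. \<exists>xs. walk E xs \<and> set xs \<subseteq> V \<and> hd xs = x \<and> last xs = y)"

definition weighted_tree :: "'b set \<Rightarrow> 'b set set \<Rightarrow> ('b set \<Rightarrow> real) \<Rightarrow> bool" where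
  "weighted_tree VT ET w \<longleftrightarrow> simple_graph VT ET \<and> VT \<noteq> {} \<and> connected_graph VT ET \<and>
     \<not> (\<exists>xs. cycle ET xs) \<and> (\<forall>e\<in>ET. w e > 0)"

definition walk_weight :: "('b set \<Rightarrow> real) \<Rightarrow> 'b list \<Rightarrow> real" where
  "walk_weight w xs = (\<Sum>i<length xs - 1. w {xs ! i, xs ! Suc i})"

definition tree_dist :: "'b set \<Rightarrow> 'b set set \<Rightarrow> ('b set \<Rightarrow> real) \<Rightarrow> 'b \<Rightarrow> 'b \<Rightarrow> real" where
  "tree_dist VT ET w u v = Inf {walk_weight w xs | xs.
      walk ET xs \<and> set xs \<subseteq> VT \<and> hd xs = u \<and> last xs = v}"

definition non_contractive ::
  "'a set \<Rightarrow> 'a set set \<Rightarrow> 'b set \<Rightarrow> 'b set set \<Rightarrow> ('b set \<Rightarrow> real) \<Rightarrow> ('a \<Rightarrow> 'b) \<Rightarrow> bool" where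
  "non_contractive V E VT ET w f \<longleftrightarrow> f ` V \<subseteq> VT \<and>
     (\<forall>x\<in>V. \<forall>y\<in>V. ereal_of_enat (graph_dist V E x y) \<le> ereal (tree_dist VT ET w (f x) (f y)))"

end

theory Submission
  imports Defs
begin


lemma walk_single[simp]: "walk E [x]"
  by (simp add: walk_def)

lemma walk_Nil[simp]: "\<not> walk E []"
  by (simp add: walk_def)

lemma walk_Cons2: "walk E (x # y # ys) \<longleftrightarrow> {x, y} \<in> E \<and> walk E (y # ys)"
proof
  assume a: "walk E (x # y # ys)"
  have "Suc 0 < length (x # y # ys)" by simp
  then have "{(x # y # ys) ! 0, (x # y # ys) ! Suc 0} \<in> E" using a unfolding walk_def by blast
  then have "{x,y} \<in> E" by simp
  moreover have "walk E (y # ys)" unfolding walk_def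
  proof (intro conjI allI impI)
    fix i assume "Suc i < length (y # ys)"
    then have "Suc (Suc i) < length (x # y # ys)" by simp
    then have "{(x # y # ys) ! Suc i, (x # y # ys) ! Suc (Suc i)} \<in> E" using a unfolding walk_def by blast
    then show "{(y # ys) ! i, (y # ys) ! Suc i} \<in> E" by simp
  qed simp
  ultimately show "{x, y} \<in> E \<and> walk E (y # ys)" by blast
next
  assume a: "{x, y} \<in> E \<and> walk E (y # ys)"
  show "walk E (x # y # ys)" unfolding walk_def
  proof (intro conjI allI impI)
    fix i assume i: "Suc i < length (x # y # ys)"
    show "{(x # y # ys) ! i, (x # y # ys) ! Suc i} \<in> E"
    proof (cases i)
      case 0 then show ?thesis using a by simp
    next
      case (Suc k)
      then have "Suc k < length (y # ys)" using i by simp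
      then have "{(y # ys) ! k, (y # ys) ! Suc k} \<in> E" using a unfolding walk_def by blast
      then show ?thesis using Suc by simp
    qed
  qed simp
qed

lemma walk_Cons: "ys \<noteq> [] \<Longrightarrow> walk E (x # ys) \<longleftrightarrow> {x, hd ys} \<in> E \<and> walk E ys"
  by (cases ys) (auto simp: walk_Cons2)

lemma walk_split: "walk E (xs @ y # ys) \<longleftrightarrow> walk E (xs @ [y]) \<and> walk E (y # ys)"
proof (induction xs)
  case Nil then show ?case by simp
next
  case (Cons x xs)
  show ?case
  proof (cases xs)
    case Nil then show ?thesis by (simp add: walk_Cons2)
  next
    case (Cons x' xs')
    then show ?thesis using Cons.IH by (simp add: walk_Cons2)
  qed
qed

lemma walk_append: "xs \<noteq> [] \<Longrightarrow> ys \<noteq> [] \<Longrightarrow>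
  walk E (xs @ ys) \<longleftrightarrow> walk E xs \<and> walk E ys \<and> {last xs, hd ys} \<in> E"
proof (induction xs)
  case Nil then show ?case by simp
next
  case (Cons x xs)
  show ?case
  proof (cases xs)
    case Nil then show ?thesis using Cons.prems by (auto simp add: walk_Cons)
  next
    case (Cons x' xs')
    then show ?thesis using Cons.IH Cons.prems by (simp add: walk_Cons2)
  qed
qed

lemma walk_snoc: "xs \<noteq> [] \<Longrightarrow> walk E (xs @ [y]) \<longleftrightarrow> walk E xs \<and> {last xs, y} \<in> E"
  using walk_append[of xs "[y]"] by simp

lemma walk_rev: "walk E (rev xs) \<longleftrightarrow> walk E xs"
proof (induction xs)
  case Nil then show ?case by simp
next
  case (Cons x xs)
  show ?case
  proof (cases xs)
    case Nil then show ?thesis by simp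
  next
    case (Cons x' xs')
    have "walk E (rev (x # xs)) \<longleftrightarrow> walk E (rev xs) \<and> {last (rev xs), x} \<in> E"
      using walk_snoc[of "rev xs" E x] Cons by simp
    also have "\<dots> \<longleftrightarrow> walk E xs \<and> {x, hd xs} \<in> E"
      using Cons.IH Cons by (simp add: insert_commute last_rev)
    also have "\<dots> \<longleftrightarrow> walk E (x # xs)" using walk_Cons[of xs E x] Cons by auto
    finally show ?thesis .
  qed
qed

lemma walk_take: assumes "walk E xs" "0 < n" shows "walk E (take n xs)"
  unfolding walk_def
proof (intro conjI allI impI)
  show "take n xs \<noteq> []" using assms by (auto simp: walk_def)
  fix i assume "Suc i < length (take n xs)"
  then show "{take n xs ! i, take n xs ! Suc i} \<in> E" using assms(1) unfolding walk_def by simp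
qed

lemma walk_drop: assumes "walk E xs" "n < length xs" shows "walk E (drop n xs)"
  unfolding walk_def
proof (intro conjI allI impI)
  show "drop n xs \<noteq> []" using assms by (auto simp: walk_def)
  fix i assume "Suc i < length (drop n xs)"
  then have "Suc (n + i) < length xs" by simp
  then have "{xs ! (n+i), xs ! Suc (n+i)} \<in> E" using assms(1) unfolding walk_def by blast
  then show "{drop n xs ! i, drop n xs ! Suc i} \<in> E" using assms by simp
qed

lemma walk_edge: "walk E xs \<Longrightarrow> Suc i < length xs \<Longrightarrow> {xs ! i, xs ! Suc i} \<in> E"
  unfolding walk_def by auto

lemma ww_Nil[simp]: "walk_weight w [] = 0" and ww_single[simp]: "walk_weight w [x] = 0"
  by (simp_all add: walk_weight_def)

lemma ww_Cons2: "walk_weight w (x # y # ys) = w {x, y} + walk_weight w (y # ys)"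
  unfolding walk_weight_def by (simp del: sum.lessThan_Suc add: sum.lessThan_Suc_shift)

lemma ww_split: "walk_weight w (xs @ y # ys) = walk_weight w (xs @ [y]) + walk_weight w (y # ys)"
proof (induction xs)
  case Nil then show ?case by simp
next
  case (Cons x xs)
  show ?case
  proof (cases xs)
    case Nil then show ?thesis by (simp add: ww_Cons2)
  next
    case (Cons x' xs')
    then show ?thesis using Cons.IH by (simp add: ww_Cons2)
  qed
qed

lemma ww_rev: "walk_weight w (rev xs) = walk_weight w xs"
proof (induction xs)
  case Nil then show ?case by simp
next
  case (Cons x xs)
  show ?case
  proof (cases xs)
    case Nil then show ?thesis by simp
  next
    case (Cons x' xs')
    have "rev (x # xs) = rev xs' @ x' # [x]" using Cons by simp
    then have "walk_weight w (rev (x # xs)) = walk_weight w (rev xs' @ [x']) + walk_weight w [x', x]"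
      using ww_split[of w "rev xs'" x' "[x]"] by simp
    also have "walk_weight w (rev xs' @ [x']) = walk_weight w xs" using Cons.IH Cons by simp
    finally show ?thesis using Cons by (simp add: ww_Cons2 insert_commute)
  qed
qed

lemma ww_nonneg: "walk E xs \<Longrightarrow> \<forall>e\<in>E. 0 \<le> w e \<Longrightarrow> 0 \<le> walk_weight w xs"
  unfolding walk_weight_def walk_def by (auto intro!: sum_nonneg)

lemma loop_erase:
  assumes "walk E xs" "\<forall>e\<in>E. 0 \<le> w e"
  shows "\<exists>ys. walk E ys \<and> distinct ys \<and> hd ys = hd xs \<and> last ys = last xs \<and> set ys \<subseteq> set xs
     \<and> length ys \<le> length xs \<and> walk_weight w ys \<le> walk_weight w xs"
  using assms(1)
proof (induction "length xs" arbitrary: xs rule: less_induct)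
  case less
  show ?case
  proof (cases "distinct xs")
    case True then show ?thesis using less.prems by blast
  next
    case False
    then obtain as v bs cs where xs: "xs = as @ [v] @ bs @ [v] @ cs"
      using not_distinct_decomp by blast
    define xs' where "xs' = as @ v # cs"
    have w1: "walk E (as @ [v])" "walk E (v # bs @ v # cs)"
      using less.prems xs walk_split[of E as v "bs @ v # cs"] by auto
    then have w2: "walk E (v # bs @ [v])" "walk E (v # cs)"
      using walk_split[of E "v # bs" v cs] by auto
    have wxs': "walk E xs'" unfolding xs'_def using w1(1) w2(2) walk_split[of E as v cs] by simp
    have len: "length xs' < length xs" unfolding xs'_def xs by simp
    have "walk_weight w xs = walk_weight w (as @ [v]) + walk_weight w (v # bs @ [v]) + walk_weight w (v # cs)"
      unfolding xs using ww_split[of w as v "bs @ v # cs"] ww_split[of w "v # bs" v cs] by simp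
    moreover have "walk_weight w xs' = walk_weight w (as @ [v]) + walk_weight w (v # cs)"
      unfolding xs'_def by (rule ww_split)
    moreover have "0 \<le> walk_weight w (v # bs @ [v])" using ww_nonneg[OF w2(1) assms(2)] .
    ultimately have wle: "walk_weight w xs' \<le> walk_weight w xs" by linarith
    have h: "hd xs' = hd xs" unfolding xs'_def xs by (cases as) auto
    have l: "last xs' = last xs" unfolding xs'_def xs by simp
    have s: "set xs' \<subseteq> set xs" unfolding xs'_def xs by auto
    obtain ys where ys: "walk E ys" "distinct ys" "hd ys = hd xs'" "last ys = last xs'" "set ys \<subseteq> set xs'"
      "length ys \<le> length xs'" "walk_weight w ys \<le> walk_weight w xs'"
      using less.hyps[OF len wxs'] by blast
    show ?thesis
      apply (rule exI[of _ ys])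
      using ys h l s wle len by simp
  qed
qed


lemma cycle_iff: "cycle E C \<longleftrightarrow> 3 \<le> length C \<and> distinct C \<and> walk E (C @ [hd C])"
proof (cases "C = []")
  case True then show ?thesis by (simp add: cycle_def)
next
  case False then show ?thesis unfolding cycle_def using walk_snoc[OF False, of E "hd C"] by auto
qed

lemma two_paths_cycle:
  assumes "walk E P" "walk E Q" "distinct P" "distinct Q" "hd P = hd Q" "last P = last Q" "P \<noteq> Q"
  shows "\<exists>C. cycle E C \<and> length C + 2 \<le> length P + length Q \<and> set C \<subseteq> set P \<union> set Q"
  using assms
proof (induction "length P" arbitrary: P Q rule: less_induct)
  case less
  obtain x P1 where P: "P = x # P1" using less.prems(1) by (cases P) auto
  obtain Q1 where Q: "Q = x # Q1" using less.prems(2,5) P by (cases Q) auto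
  have P1ne: "P1 \<noteq> []"
  proof
    assume "P1 = []"
    then have "last Q = x" using less.prems(6) P by simp
    then have "Q1 = []" using less.prems(4) Q by (cases "Q1 = []") (auto dest: last_in_set)
    then show False using less.prems(7) P Q \<open>P1 = []\<close> by simp
  qed
  have Q1ne: "Q1 \<noteq> []"
  proof
    assume "Q1 = []"
    then have "last P = x" using less.prems(6) Q by simp
    then have "P1 = []" using less.prems(3) P by (cases "P1 = []") (auto dest: last_in_set)
    then show False using P1ne by simp
  qed
  have wP1: "walk E P1" and eP: "{x, hd P1} \<in> E" using less.prems(1) P walk_Cons[OF P1ne] by auto
  have wQ1: "walk E Q1" and eQ: "{x, hd Q1} \<in> E" using less.prems(2) Q walk_Cons[OF Q1ne] by auto
  have dP1: "distinct P1" "x \<notin> set P1" using less.prems(3) P by auto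
  have dQ1: "distinct Q1" "x \<notin> set Q1" using less.prems(4) Q by auto
  have lastPQ: "last P1 = last Q1" using less.prems(6) P Q P1ne Q1ne by simp
  show ?case
  proof (cases "hd P1 = hd Q1")
    case True
    have "P1 \<noteq> Q1" using less.prems(7) P Q by simp
    then obtain C where C: "cycle E C" "length C + 2 \<le> length P1 + length Q1" "set C \<subseteq> set P1 \<union> set Q1"
      using less.hyps[of P1 Q1] P wP1 wQ1 dP1 dQ1 True lastPQ by auto
    show ?thesis using C P Q by (intro exI[of _ C]) auto
  next
    case False
    define i where "i = (LEAST i. i < length P1 \<and> P1 ! i \<in> set Q1)"
    have ex: "length P1 - 1 < length P1 \<and> P1 ! (length P1 - 1) \<in> set Q1"
      using P1ne Q1ne lastPQ by (simp add: last_conv_nth)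
    have i1: "i < length P1" and i2: "P1 ! i \<in> set Q1"
      using LeastI[of "\<lambda>i. i < length P1 \<and> P1 ! i \<in> set Q1", OF ex] unfolding i_def by auto
    have i3: "P1 ! k \<notin> set Q1" if "k < i" for k
    proof
      assume "P1 ! k \<in> set Q1"
      moreover have "k < length P1" using that i1 by simp
      ultimately have "i \<le> k" unfolding i_def by (simp add: Least_le)
      then show False using that by simp
    qed
    obtain j where j1: "j < length Q1" and j2: "Q1 ! j = P1 ! i"
      using i2 by (auto simp: in_set_conv_nth)
    define u where "u = P1 ! i"
    define C where "C = x # take i P1 @ rev (take (Suc j) Q1)"
    have tQ: "take (Suc j) Q1 = take j Q1 @ [u]" using j1 j2 u_def by (simp add: take_Suc_conv_app_nth)
    have tP: "take (Suc i) P1 = take i P1 @ [u]" using i1 u_def by (simp add: take_Suc_conv_app_nth)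
    have CX: "C @ [x] = (x # take i P1) @ u # (rev (take j Q1) @ [x])"
      unfolding C_def tQ by simp
    have w1: "walk E ((x # take i P1) @ [u])"
    proof -
      have "(x # take i P1) @ [u] = take (Suc (Suc i)) P" using P tP by simp
      then show ?thesis using walk_take[OF less.prems(1)] by simp
    qed
    have w2: "walk E (u # (rev (take j Q1) @ [x]))"
    proof -
      have "u # (rev (take j Q1) @ [x]) = rev (take (Suc (Suc j)) Q)" using Q tQ by simp
      moreover have "walk E (take (Suc (Suc j)) Q)" using walk_take[OF less.prems(2)] by simp
      ultimately show ?thesis using walk_rev by metis
    qed
    have wC: "walk E (C @ [hd C])" using CX w1 w2 walk_split[of E "x # take i P1" u] by (simp add: C_def)
    have lenC: "length C = i + j + 2" unfolding C_def using i1 j1 by simp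
    have ij: "i + j \<ge> 1"
    proof (rule ccontr)
      assume "\<not> 1 \<le> i + j"
      then have "i = 0" "j = 0" by auto
      then have "hd P1 = hd Q1" using j2 P1ne Q1ne by (simp add: hd_conv_nth)
      then show False using False by simp
    qed
    have dC: "distinct C"
    proof -
      have a: "x \<notin> set (take i P1)" using dP1 by (meson in_set_takeD)
      have b: "x \<notin> set (take (Suc j) Q1)" using dQ1 by (meson in_set_takeD)
      have c: "set (take i P1) \<inter> set (take (Suc j) Q1) = {}"
      proof (rule ccontr)
        assume "set (take i P1) \<inter> set (take (Suc j) Q1) \<noteq> {}"
        then obtain y where "y \<in> set (take i P1)" "y \<in> set Q1" by (auto dest: in_set_takeD)
        then obtain k where "k < i" "y = P1 ! k" using i1 by (auto simp: nth_take in_set_conv_nth)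
        then show False using i3 \<open>y \<in> set Q1\<close> by blast
      qed
      show ?thesis unfolding C_def using a b c dP1 dQ1 by auto
    qed
    have sC: "set C \<subseteq> set P \<union> set Q" unfolding C_def P Q
      using set_take_subset[of i P1] set_take_subset[of "Suc j" Q1] by auto
    have "cycle E C" unfolding cycle_iff using wC dC lenC ij by simp
    moreover have "length C + 2 \<le> length P + length Q" using lenC i1 j1 P Q by simp
    ultimately show ?thesis using sC by blast
  qed
qed



lemma walk_mono: "walk E xs \<Longrightarrow> E \<subseteq> E' \<Longrightarrow> walk E' xs"
  unfolding walk_def by blast

lemma cycle_mono: "cycle E xs \<Longrightarrow> E \<subseteq> E' \<Longrightarrow> cycle E' xs"
  unfolding cycle_def using walk_mono by blast

lemma forest_card:
  assumes "finite V" "\<forall>e\<in>E. \<exists>x y. x \<noteq> y \<and> x \<in> V \<and> y \<in> V \<and> e = {x, y}"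
    "\<not> (\<exists>C. cycle E C)" "V \<noteq> {}"
  shows "card E \<le> card V - 1"
  using assms
proof (induction "card V" arbitrary: V E rule: less_induct)
  case less
  have finE: "finite E"
  proof -
    have "E \<subseteq> Pow V"
    proof
      fix e assume "e \<in> E"
      then obtain x y where "x \<in> V" "y \<in> V" "e = {x, y}" using less.prems(2) by meson
      then show "e \<in> Pow V" by simp
    qed
    then show ?thesis using less.prems(1) finite_subset by blast
  qed
  show ?case
  proof (cases "E = {}")
    case True then show ?thesis by simp
  next
    case False
    then obtain e0 where "e0 \<in> E" by blast
    then obtain a b where ab: "a \<noteq> b" "a \<in> V" "b \<in> V" "e0 = {a, b}" using less.prems(2) by meson
    define S where "S = {xs. walk E xs \<and> distinct xs \<and> set xs \<subseteq> V}"
    have "[a, b] \<in> S" unfolding S_def using ab \<open>e0 \<in> E\<close> by (simp add: walk_Cons2)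
    have bnd: "length xs \<le> card V" if "xs \<in> S" for xs
    proof -
      have "set xs \<subseteq> V" "distinct xs" using that unfolding S_def by auto
      then have "card (set xs) \<le> card V" using card_mono less.prems(1) by blast
      then show ?thesis using \<open>distinct xs\<close> by (simp add: distinct_card)
    qed
    have p2: "\<exists>xs\<in>S. length xs = 2" using \<open>[a, b] \<in> S\<close> by force
    have pb: "\<forall>y. (\<exists>xs\<in>S. length xs = y) \<longrightarrow> y \<le> card V" using bnd by blast
    obtain n where n: "\<exists>xs\<in>S. length xs = n" "\<forall>m. (\<exists>xs\<in>S. length xs = m) \<longrightarrow> m \<le> n"
      using Nat.ex_has_greatest_nat[of "\<lambda>n. \<exists>xs\<in>S. length xs = n", OF p2 pb] by blast
    then obtain xs where xs: "xs \<in> S" "length xs = n" by blast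
    have maxl: "length ys \<le> length xs" if "ys \<in> S" for ys using n(2) that xs(2) by blast
    have "2 \<le> length xs" using maxl[OF \<open>[a, b] \<in> S\<close>] by simp
    define v where "v = last xs"
    define u where "u = xs ! (length xs - 2)"
    have wxs: "walk E xs" and dxs: "distinct xs" and sxs: "set xs \<subseteq> V" using xs(1) unfolding S_def by auto
    have "xs \<noteq> []" using \<open>2 \<le> length xs\<close> by auto
    then have vnth: "v = xs ! (length xs - 1)" unfolding v_def by (rule last_conv_nth)
    have uv: "{u, v} \<in> E"
      using walk_edge[OF wxs, of "length xs - 2"] \<open>2 \<le> length xs\<close> unfolding u_def vnth
      by (simp add: Suc_diff_Suc numeral_2_eq_2)
    have uneqv: "u \<noteq> v" unfolding u_def vnth using dxs \<open>2 \<le> length xs\<close> by (simp add: nth_eq_iff_index_eq)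
    have leaf: "e = {u, v}" if eE: "e \<in> E" and ve: "v \<in> e" for e
    proof -
      obtain x1 y1 where xy: "x1 \<noteq> y1" "x1 \<in> V" "y1 \<in> V" "e = {x1, y1}" using less.prems(2) eE by meson
      have "\<exists>y. y \<noteq> v \<and> y \<in> V \<and> e = {v, y}"
      proof (cases "v = x1")
        case True then show ?thesis using xy by (intro exI[of _ y1]) auto
      next
        case False then have "v = y1" using ve xy by auto
        then show ?thesis using xy by (intro exI[of _ x1]) auto
      qed
      then obtain y where y: "y \<noteq> v" "y \<in> V" "e = {v, y}" by blast
      have "{v, y} \<in> E" using eE y by simp
      show ?thesis
      proof (cases "y \<in> set xs")
        case False
        have xne: "xs \<noteq> []" using \<open>2 \<le> length xs\<close> by auto
        have "walk E (xs @ [y])" using walk_snoc[OF xne, of E y] wxs \<open>{v, y} \<in> E\<close> unfolding v_def by simp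
        moreover have "distinct (xs @ [y])" using dxs False by simp
        moreover have "set (xs @ [y]) \<subseteq> V" using sxs y by simp
        ultimately have "xs @ [y] \<in> S" unfolding S_def by blast
        then show ?thesis using maxl[of "xs @ [y]"] by simp
      next
        case True
        then obtain k where k: "k < length xs" "xs ! k = y" by (auto simp: in_set_conv_nth)
        have "k \<noteq> length xs - 1" using k y vnth by auto
        then have k2: "k < length xs - 1" using k by simp
        show ?thesis
        proof (cases "k = length xs - 2")
          case True then show ?thesis using y k u_def by auto
        next
          case False
          then have k3: "k + 3 \<le> length xs" using k2 by simp
          define C where "C = drop k xs"
          have "cycle E C" unfolding cycle_def
          proof (intro conjI)
            show "3 \<le> length C" unfolding C_def using k3 by simp
            show "distinct C" unfolding C_def using dxs by simp
            show "walk E C" unfolding C_def using walk_drop[OF wxs k(1)] .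
            have "last C = v" "hd C = y" unfolding C_def v_def using k k3 by (auto simp: hd_drop_conv_nth)
            then show "{last C, hd C} \<in> E" using \<open>{v, y} \<in> E\<close> by simp
          qed
          then show ?thesis using less.prems(3) by blast
        qed
      qed
    qed
    define V' where "V' = V - {v}"
    define E' where "E' = E - {{u, v}}"
    have vV: "v \<in> V" unfolding v_def using sxs \<open>2 \<le> length xs\<close> by (intro subsetD[OF _ last_in_set]) auto
    have uV: "u \<in> V" unfolding u_def using sxs \<open>2 \<le> length xs\<close> by (intro subsetD[OF _ nth_mem]) auto
    have c1: "card V' < card V" unfolding V'_def using vV less.prems(1) by (meson card_Diff1_less)
    have c2: "\<forall>e\<in>E'. \<exists>x y. x \<noteq> y \<and> x \<in> V' \<and> y \<in> V' \<and> e = {x, y}"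
    proof
      fix e assume e: "e \<in> E'"
      then have "e \<in> E" "e \<noteq> {u, v}" unfolding E'_def by auto
      then have "v \<notin> e" using leaf by blast
      then show "\<exists>x y. x \<noteq> y \<and> x \<in> V' \<and> y \<in> V' \<and> e = {x, y}"
        using less.prems(2) \<open>e \<in> E\<close> unfolding V'_def by blast
    qed
    have c3: "\<not> (\<exists>C. cycle E' C)" using less.prems(3) cycle_mono[of E' _ E] unfolding E'_def by blast
    have c4: "V' \<noteq> {}" unfolding V'_def using uV uneqv by blast
    have "card E' \<le> card V' - 1"
      using less.hyps[OF c1 _ c2 c3 c4] less.prems(1) unfolding V'_def by simp
    moreover have "card E = card E' + 1" unfolding E'_def using uv finE
      by (metis Suc_eq_plus1 card_Suc_Diff1)
    moreover have "card V' = card V - 1" unfolding V'_def using vV less.prems(1) by simp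
    moreover have "card V' > 0" using c4 less.prems(1) unfolding V'_def by (simp add: card_gt_0_iff)
    ultimately show ?thesis by linarith
  qed
qed



lemma walk_set:
  assumes "walk E xs" "\<forall>e\<in>E. e \<subseteq> V" "hd xs \<in> V"
  shows "set xs \<subseteq> V"
  using assms
proof (induction xs)
  case Nil then show ?case by simp
next
  case (Cons x ys)
  show ?case
  proof (cases "ys = []")
    case True then show ?thesis using Cons.prems by simp
  next
    case False
    have "{x, hd ys} \<in> E" "walk E ys" using Cons.prems(1) walk_Cons[OF False] by auto
    then have "hd ys \<in> V" using Cons.prems(2) by blast
    then have "set ys \<subseteq> V" using Cons.IH \<open>walk E ys\<close> Cons.prems(2) by blast
    then show ?thesis using Cons.prems(3) by simp
  qed
qed

lemma cycle_set:
  assumes "cycle E C" "\<forall>e\<in>E. e \<subseteq> V"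
  shows "set C \<subseteq> V"
proof -
  have "{last C, hd C} \<in> E" "walk E C" using assms(1) unfolding cycle_def by auto
  then have "hd C \<in> V" using assms(2) by blast
  then show ?thesis using walk_set[OF \<open>walk E C\<close> assms(2)] by blast
qed

lemma concat_walk:
  assumes "walk E P1" "walk E P2" "last P1 = hd P2"
  shows "walk E (butlast P1 @ P2) \<and> hd (butlast P1 @ P2) = hd P1 \<and> last (butlast P1 @ P2) = last P2
    \<and> walk_weight w (butlast P1 @ P2) = walk_weight w P1 + walk_weight w P2
    \<and> set (butlast P1 @ P2) = set P1 \<union> set P2"
proof -
  have ne1: "P1 \<noteq> []" and ne2: "P2 \<noteq> []" using assms by auto
  define y where "y = hd P2"
  have e1: "P1 = butlast P1 @ [y]" using ne1 assms(3) unfolding y_def by (metis append_butlast_last_id)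
  have e2: "P2 = y # tl P2" using ne2 unfolding y_def by simp
  have R: "butlast P1 @ P2 = butlast P1 @ y # tl P2" using e2 by simp
  have "walk E (butlast P1 @ y # tl P2)" using walk_split[of E "butlast P1" y "tl P2"] assms(1,2) e1 e2 by simp
  then have A: "walk E (butlast P1 @ P2)" using R by simp
  have "walk_weight w (butlast P1 @ y # tl P2) = walk_weight w P1 + walk_weight w P2"
    using ww_split[of w "butlast P1" y "tl P2"] e1 e2 by simp
  then have B: "walk_weight w (butlast P1 @ P2) = walk_weight w P1 + walk_weight w P2" using R by simp
  moreover have "hd (butlast P1 @ P2) = hd P1" using e1 unfolding y_def by (cases "butlast P1") auto
  moreover have "last (butlast P1 @ P2) = last P2" using ne2 by simp
  moreover have "set (butlast P1 @ P2) = set P1 \<union> set P2"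
  proof -
    have "set P1 = set (butlast P1) \<union> {y}" using e1 by (metis set_append empty_set list.simps(15))
    moreover have "y \<in> set P2" using ne2 unfolding y_def by simp
    ultimately show ?thesis by auto
  qed
  ultimately show ?thesis using A B by blast
qed

locale wtree =
  fixes VT :: "'b set" and ET :: "'b set set" and w :: "'b set \<Rightarrow> real"
  assumes wt: "weighted_tree VT ET w"
begin

lemma finV: "finite VT" using wt unfolding weighted_tree_def simple_graph_def by blast

lemma edge_sub: "\<forall>e\<in>ET. e \<subseteq> VT"
proof
  fix e assume "e \<in> ET"
  then obtain x y where "x \<in> VT" "y \<in> VT" "e = {x, y}" using wt unfolding weighted_tree_def simple_graph_def by meson
  then show "e \<subseteq> VT" by simp
qed

lemma wpos: "\<forall>e\<in>ET. 0 \<le> w e" using wt unfolding weighted_tree_def by (simp add: less_imp_le)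

lemma acyc: "\<not> cycle ET C" using wt unfolding weighted_tree_def by blast

lemma conn: "x \<in> VT \<Longrightarrow> y \<in> VT \<Longrightarrow> \<exists>xs. walk ET xs \<and> set xs \<subseteq> VT \<and> hd xs = x \<and> last xs = y"
  using wt unfolding weighted_tree_def connected_graph_def by blast

lemma path_unique:
  assumes "walk ET P" "walk ET Q" "distinct P" "distinct Q" "hd P = hd Q" "last P = last Q"
  shows "P = Q"
  using two_paths_cycle[OF assms] acyc by blast

definition tpath :: "'b \<Rightarrow> 'b \<Rightarrow> 'b list" where
  "tpath x y = (THE P. walk ET P \<and> distinct P \<and> hd P = x \<and> last P = y)"

lemma tpath_ex:
  assumes "x \<in> VT" "y \<in> VT"
  shows "\<exists>P. walk ET P \<and> distinct P \<and> hd P = x \<and> last P = y"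
proof -
  obtain xs where "walk ET xs" "hd xs = x" "last xs = y" using conn[OF assms] by blast
  then show ?thesis using loop_erase[OF \<open>walk ET xs\<close> wpos] by auto
qed

lemma tpath:
  assumes "x \<in> VT" "y \<in> VT"
  shows "walk ET (tpath x y)" "distinct (tpath x y)" "hd (tpath x y) = x" "last (tpath x y) = y"
proof -
  obtain P0 where P0: "walk ET P0 \<and> distinct P0 \<and> hd P0 = x \<and> last P0 = y" using tpath_ex[OF assms] by blast
  have "\<exists>!P. walk ET P \<and> distinct P \<and> hd P = x \<and> last P = y"
  proof (rule ex1I[of _ P0])
    show "walk ET P0 \<and> distinct P0 \<and> hd P0 = x \<and> last P0 = y" using P0 .
    fix P assume "walk ET P \<and> distinct P \<and> hd P = x \<and> last P = y"
    then show "P = P0" using P0 path_unique[of P P0] by simp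
  qed
  then have "walk ET (tpath x y) \<and> distinct (tpath x y) \<and> hd (tpath x y) = x \<and> last (tpath x y) = y"
    unfolding tpath_def by (rule theI')
  then show "walk ET (tpath x y)" "distinct (tpath x y)" "hd (tpath x y) = x" "last (tpath x y) = y"
    by auto
qed

lemma tpath_set: "x \<in> VT \<Longrightarrow> y \<in> VT \<Longrightarrow> set (tpath x y) \<subseteq> VT"
  using walk_set[OF tpath(1) edge_sub] tpath(3) by simp

lemma tpath_eq:
  assumes "walk ET P" "distinct P" "hd P \<in> VT" "last P \<in> VT"
  shows "tpath (hd P) (last P) = P"
  using path_unique[OF tpath(1)[OF assms(3,4)] assms(1) tpath(2)[OF assms(3,4)] assms(2)]
    tpath(3,4)[OF assms(3,4)] by simp

lemma walk_contains_path:
  assumes "walk ET xs" "hd xs \<in> VT" "last xs \<in> VT"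
  shows "set (tpath (hd xs) (last xs)) \<subseteq> set xs \<and> walk_weight w (tpath (hd xs) (last xs)) \<le> walk_weight w xs"
proof -
  obtain ys where ys: "walk ET ys" "distinct ys" "hd ys = hd xs" "last ys = last xs" "set ys \<subseteq> set xs"
    "walk_weight w ys \<le> walk_weight w xs"
    using loop_erase[OF assms(1) wpos] by blast
  have "tpath (hd ys) (last ys) = ys" using tpath_eq[OF ys(1,2)] ys(3,4) assms(2,3) by simp
  then show ?thesis using ys by simp
qed

abbreviation d :: "'b \<Rightarrow> 'b \<Rightarrow> real" where "d \<equiv> tree_dist VT ET w"

lemma td_eq:
  assumes "x \<in> VT" "y \<in> VT"
  shows "d x y = walk_weight w (tpath x y)"
  unfolding tree_dist_def
proof (rule cInf_eq_minimum)
  show "walk_weight w (tpath x y) \<in> {walk_weight w xs |xs. walk ET xs \<and> set xs \<subseteq> VT \<and> hd xs = x \<and> last xs = y}"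
    using tpath[OF assms] tpath_set[OF assms] by blast
  fix r assume "r \<in> {walk_weight w xs |xs. walk ET xs \<and> set xs \<subseteq> VT \<and> hd xs = x \<and> last xs = y}"
  then obtain xs where xs: "r = walk_weight w xs" "walk ET xs" "hd xs = x" "last xs = y" by blast
  then show "walk_weight w (tpath x y) \<le> r" using walk_contains_path[OF xs(2)] assms by simp
qed

definition Bt :: "'b \<Rightarrow> 'b \<Rightarrow> 'b set" where "Bt x y = set (tpath x y)"

lemma tpath_rev: "x \<in> VT \<Longrightarrow> y \<in> VT \<Longrightarrow> tpath y x = rev (tpath x y)"
proof -
  assume a: "x \<in> VT" "y \<in> VT"
  let ?R = "rev (tpath x y)"
  have "walk ET ?R" "distinct ?R" using tpath[OF a] walk_rev by auto
  moreover have "hd ?R = y" "last ?R = x" using tpath[OF a] by (auto simp: hd_rev last_rev)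
  ultimately show ?thesis using tpath_eq[of ?R] a by simp
qed

lemma Bt_sym: "x \<in> VT \<Longrightarrow> y \<in> VT \<Longrightarrow> Bt y x = Bt x y"
  unfolding Bt_def using tpath_rev[of x y] by simp

lemma td_sym: "x \<in> VT \<Longrightarrow> y \<in> VT \<Longrightarrow> d y x = d x y"
proof -
  assume a: "x \<in> VT" "y \<in> VT"
  have "d y x = walk_weight w (tpath y x)" using td_eq a by simp
  also have "\<dots> = walk_weight w (rev (tpath x y))" using tpath_rev[OF a] by simp
  also have "\<dots> = d x y" using ww_rev td_eq a by simp
  finally show ?thesis .
qed

lemma Bt_ends: "x \<in> VT \<Longrightarrow> y \<in> VT \<Longrightarrow> x \<in> Bt x y \<and> y \<in> Bt x y"
proof -
  assume a: "x \<in> VT" "y \<in> VT"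
  have "tpath x y \<noteq> []" using tpath(1)[OF a] by auto
  then show ?thesis unfolding Bt_def using tpath(3,4)[OF a] hd_in_set last_in_set by metis
qed

lemma td_tri:
  assumes "x \<in> VT" "y \<in> VT" "z \<in> VT"
  shows "d x z \<le> d x y + d y z"
proof -
  let ?R = "butlast (tpath x y) @ tpath y z"
  have c: "walk ET ?R \<and> hd ?R = x \<and> last ?R = z \<and> walk_weight w ?R = d x y + d y z"
    using concat_walk[OF tpath(1)[OF assms(1,2)] tpath(1)[OF assms(2,3)], of w]
      tpath(3,4)[OF assms(1,2)] tpath(3,4)[OF assms(2,3)] td_eq assms by simp
  then have "walk_weight w (tpath x z) \<le> walk_weight w ?R" using walk_contains_path[of ?R] assms by simp
  then show ?thesis using c td_eq[OF assms(1,3)] by simp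
qed

lemma Bt_cover:
  assumes "x \<in> VT" "y \<in> VT" "z \<in> VT"
  shows "Bt x z \<subseteq> Bt x y \<union> Bt y z"
proof -
  let ?R = "butlast (tpath x y) @ tpath y z"
  have c: "walk ET ?R \<and> hd ?R = x \<and> last ?R = z \<and> set ?R = Bt x y \<union> Bt y z"
    using concat_walk[OF tpath(1)[OF assms(1,2)] tpath(1)[OF assms(2,3)], of w]
      tpath(3,4)[OF assms(1,2)] tpath(3,4)[OF assms(2,3)] unfolding Bt_def by simp
  then have "set (tpath x z) \<subseteq> set ?R" using walk_contains_path[of ?R] assms by simp
  then show ?thesis using c unfolding Bt_def by simp
qed

lemma td_split:
  assumes "x \<in> VT" "y \<in> VT" "z \<in> Bt x y"
  shows "d x z + d z y = d x y"
proof -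
  define P where "P = tpath x y"
  obtain k where k: "k < length P" "P ! k = z" using assms(3) unfolding Bt_def P_def by (auto simp: in_set_conv_nth)
  have zV: "z \<in> VT" using assms tpath_set unfolding Bt_def by blast
  have wP: "walk ET P" "distinct P" "hd P = x" "last P = y" using tpath[OF assms(1,2)] unfolding P_def by auto
  have P1: "take (Suc k) P = take k P @ [z]" using k by (simp add: take_Suc_conv_app_nth)
  have P2: "drop k P = z # drop (Suc k) P" using k by (metis Cons_nth_drop_Suc)
  have Pd: "P = take k P @ z # drop (Suc k) P" using k by (metis id_take_nth_drop)
  have wt1: "walk ET (take (Suc k) P)" using walk_take[OF wP(1)] by simp
  have wt2: "walk ET (drop k P)" using walk_drop[OF wP(1) k(1)] .
  have h1: "hd (take (Suc k) P) = x" using wP(3) k by (cases P) auto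
  have l1: "last (take (Suc k) P) = z" using P1 by simp
  have h2: "hd (drop k P) = z" using P2 by simp
  have l2: "last (drop k P) = y" using wP(4) k by simp
  have "tpath x z = take (Suc k) P" using tpath_eq[OF wt1] wP(2) h1 l1 assms(1) zV by (simp add: distinct_take)
  moreover have "tpath z y = drop k P" using tpath_eq[OF wt2] wP(2) h2 l2 assms(2) zV by (simp add: distinct_drop)
  moreover have "walk_weight w P = walk_weight w (take (Suc k) P) + walk_weight w (drop k P)"
    using ww_split[of w "take k P" z "drop (Suc k) P"] Pd P1 P2 by simp
  ultimately show ?thesis using td_eq assms(1,2) zV unfolding P_def by simp
qed

end


lemma last_notin_butlast: "distinct xs \<Longrightarrow> xs \<noteq> [] \<Longrightarrow> last xs \<notin> set (butlast xs)"
  by (metis append_butlast_last_id distinct_append disjoint_iff list.set_intros(1))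

context wtree
begin

lemma median:
  assumes xV: "x \<in> VT" and yV: "y \<in> VT" and vV: "v \<in> VT"
  shows "\<exists>c. c \<in> Bt x y \<and> c \<in> Bt x v \<and> c \<in> Bt v y"
proof -
  define P where "P = tpath x y"
  define n where "n = length P"
  have wP: "walk ET P" "distinct P" "hd P = x" "last P = y" using tpath[OF xV yV] unfolding P_def by auto
  have nP: "P \<noteq> []" using wP(1) by auto
  have n0: "0 < n" using nP unfolding n_def by simp
  have p0: "0 < n \<and> P ! 0 \<in> Bt x v" using n0 wP(3) nP Bt_ends[OF xV vV] by (simp add: hd_conv_nth[symmetric])
  have pb: "\<forall>m. (m < n \<and> P ! m \<in> Bt x v) \<longrightarrow> m \<le> n" by simp
  obtain j where j: "j < n" "P ! j \<in> Bt x v" and jmax: "\<And>m. m < n \<Longrightarrow> P ! m \<in> Bt x v \<Longrightarrow> m \<le> j"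
    using Nat.ex_has_greatest_nat[of "\<lambda>m. m < n \<and> P ! m \<in> Bt x v", OF p0 pb] by blast
  show ?thesis
  proof (cases "j = n - 1")
    case True
    then have "P ! j = y" using wP(4) nP unfolding n_def by (simp add: last_conv_nth)
    then show ?thesis using j(2) Bt_ends[OF xV yV] Bt_ends[OF vV yV] by metis
  next
    case False
    define c where "c = P ! j"
    have cxy: "c \<in> Bt x y" unfolding c_def Bt_def P_def[symmetric] using j(1) n_def by simp
    have cV: "c \<in> VT" using cxy tpath_set[OF xV yV] unfolding Bt_def by blast
    define Q where "Q = tpath x v"
    have wQ: "walk ET Q" "distinct Q" "hd Q = x" "last Q = v" using tpath[OF xV vV] unfolding Q_def by auto
    obtain k where k: "k < length Q" "Q ! k = c" using j(2) unfolding c_def Bt_def Q_def[symmetric]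
      by (auto simp: in_set_conv_nth)
    define R where "R = rev (drop k Q)"
    have wR: "walk ET R" using walk_drop[OF wQ(1) k(1)] walk_rev unfolding R_def by blast
    have dR: "distinct R" using wQ(2) unfolding R_def by simp
    have hR: "hd R = v" unfolding R_def using k(1) wQ(4) by (simp add: hd_rev)
    have lR: "last R = c" unfolding R_def using k by (simp add: last_rev hd_drop_conv_nth)
    have sR: "set R \<subseteq> Bt x v" unfolding R_def Bt_def Q_def[symmetric] by (simp add: set_drop_subset)
    define S where "S = drop j P"
    have wS: "walk ET S" using walk_drop[OF wP(1)] j(1) unfolding S_def n_def by simp
    have dS: "distinct S" using wP(2) unfolding S_def by simp
    have hS: "hd S = c" unfolding S_def c_def using j(1) n_def by (simp add: hd_drop_conv_nth)
    have lS: "last S = y" unfolding S_def using j(1) n_def wP(4) by simp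
    have S_eq: "S = c # drop (Suc j) P" unfolding S_def c_def using j(1) n_def by (metis Cons_nth_drop_Suc)
    have tlS: "u \<notin> Bt x v" if uin: "u \<in> set (drop (Suc j) P)" for u
    proof
      assume uB: "u \<in> Bt x v"
      obtain i where "i < length (drop (Suc j) P)" "drop (Suc j) P ! i = u" using uin unfolding in_set_conv_nth by blast
      then have "Suc j + i < n" "P ! (Suc j + i) = u" unfolding n_def by auto
      then have "Suc j + i \<le> j" using jmax uB by blast
      then show False by simp
    qed
    define T where "T = butlast R @ S"
    have cw: "walk ET T \<and> hd T = hd R \<and> last T = last S \<and> walk_weight w T = walk_weight w R + walk_weight w S
      \<and> set T = set R \<union> set S"
      unfolding T_def using concat_walk[OF wR wS] lR hS by simp
    have dT: "distinct T"
    proof -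
      have "set (butlast R) \<inter> set S = {}"
      proof (rule ccontr)
        assume "set (butlast R) \<inter> set S \<noteq> {}"
        then obtain u where u1: "u \<in> set (butlast R)" and u2: "u \<in> set S" by auto
        have "R \<noteq> []" using wR by auto
        then have "c \<notin> set (butlast R)" using last_notin_butlast[OF dR] lR by simp
        then have "u \<noteq> c" using u1 by auto
        then have "u \<in> set (drop (Suc j) P)" using u2 S_eq by simp
        moreover have "u \<in> Bt x v" using sR in_set_butlastD[OF u1] by auto
        ultimately show False using tlS[of u] by simp
      qed
      then show ?thesis unfolding T_def using dR dS by (simp add: distinct_butlast)
    qed
    have "tpath v y = T" using tpath_eq[of T] cw dT hR lS vV yV by simp
    then have "c \<in> Bt v y" unfolding Bt_def using cw S_eq by simp
    moreover have "c \<in> Bt x v" using j(2) c_def by simp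
    ultimately show ?thesis using cxy by blast
  qed
qed

lemma seq_cover:
  assumes "set s \<subseteq> VT" "2 \<le> length s" "z \<in> Bt (hd s) (last s)"
  shows "\<exists>i. Suc i < length s \<and> z \<in> Bt (s ! i) (s ! Suc i)"
  using assms
proof (induction s)
  case Nil then show ?case by simp
next
  case (Cons a t)
  have tne: "t \<noteq> []" using Cons.prems(2) by auto
  show ?case
  proof (cases "length t = 1")
    case True
    then obtain b where "t = [b]" by (cases t) auto
    then show ?thesis using Cons.prems(3) by (intro exI[of _ 0]) simp
  next
    case False
    have "length t \<noteq> 0" using tne by simp
    then have t2: "2 \<le> length t" using False by linarith
    have aV: "a \<in> VT" and tV: "set t \<subseteq> VT" using Cons.prems(1) by auto
    have hV: "hd t \<in> VT" "last t \<in> VT" using tV tne by auto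
    have "z \<in> Bt a (last t)" using Cons.prems(3) tne by simp
    then have "z \<in> Bt a (hd t) \<union> Bt (hd t) (last t)" using Bt_cover[OF aV hV] by blast
    then show ?thesis
    proof
      assume "z \<in> Bt a (hd t)"
      then show ?thesis using tne by (intro exI[of _ 0]) (simp add: hd_conv_nth)
    next
      assume "z \<in> Bt (hd t) (last t)"
      then obtain i where "Suc i < length t" "z \<in> Bt (t ! i) (t ! Suc i)" using Cons.IH[OF tV t2] by blast
      then show ?thesis by (intro exI[of _ "Suc i"]) simp
    qed
  qed
qed

lemma helly3:
  assumes "set s1 \<subseteq> VT" "set s2 \<subseteq> VT" "set s3 \<subseteq> VT"
    "2 \<le> length s1" "2 \<le> length s2" "2 \<le> length s3"
    "last s1 = hd s2" "last s2 = hd s3" "last s3 = hd s1"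
  shows "\<exists>z. (\<exists>i. Suc i < length s1 \<and> z \<in> Bt (s1 ! i) (s1 ! Suc i))
      \<and> (\<exists>i. Suc i < length s2 \<and> z \<in> Bt (s2 ! i) (s2 ! Suc i))
      \<and> (\<exists>i. Suc i < length s3 \<and> z \<in> Bt (s3 ! i) (s3 ! Suc i))"
proof -
  have ne: "s1 \<noteq> []" "s2 \<noteq> []" "s3 \<noteq> []" using assms(4-6) by auto
  have V: "hd s1 \<in> VT" "hd s2 \<in> VT" "hd s3 \<in> VT" using assms(1-3) ne by auto
  obtain c where c: "c \<in> Bt (hd s1) (hd s2)" "c \<in> Bt (hd s1) (hd s3)" "c \<in> Bt (hd s3) (hd s2)"
    using median[OF V(1) V(2) V(3)] by blast
  have c1: "c \<in> Bt (hd s1) (last s1)" using c(1) assms(7) by simp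
  have c2: "c \<in> Bt (hd s2) (last s2)" using c(3) assms(8) Bt_sym[OF V(3) V(2)] by simp
  have c3: "c \<in> Bt (hd s3) (last s3)" using c(2) assms(9) Bt_sym[OF V(1) V(3)] by simp
  show ?thesis using seq_cover[OF assms(1) assms(4) c1] seq_cover[OF assms(2) assms(5) c2]
      seq_cover[OF assms(3) assms(6) c3] by blast
qed

lemma near:
  assumes "a \<in> VT" "b \<in> VT" "z \<in> Bt a b" "d a b < L"
  shows "d a z < L / 2 \<or> d b z < L / 2"
proof -
  have zV: "z \<in> VT" using assms(3) tpath_set[OF assms(1,2)] unfolding Bt_def by blast
  have "d a z + d z b = d a b" using td_split[OF assms(1-3)] .
  moreover have "d z b = d b z" using td_sym[OF assms(2) zV] by simp
  ultimately show ?thesis using assms(4) by linarith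
qed

end


lemma girth_le_cycle:
  assumes "cycle E C" "set C \<subseteq> V"
  shows "girth V E \<le> enat (length C)"
  unfolding girth_def using assms by (intro Inf_lower) blast

lemma girth_ge3: "3 \<le> girth V E"
  unfolding girth_def cycle_def by (intro Inf_greatest) auto

lemma girth_bound:
  assumes EV: "\<forall>e\<in>E. e \<subseteq> V" and cyc: "cycle E C" and ij: "i < j" "j < length C"
    and wQ: "walk E Q" "hd Q = C ! i" "last Q = C ! j" and lQ: "length Q < Suc (j - i)"
  shows "girth V E \<le> enat (j - i + length Q - 1)"
proof -
  obtain Q' where Q': "walk E Q'" "distinct Q'" "hd Q' = hd Q" "last Q' = last Q" "length Q' \<le> length Q"
    using loop_erase[OF wQ(1), of "\<lambda>_. 0"] by auto
  define A where "A = drop i (take (Suc j) C)"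
  have dC: "distinct C" and wC: "walk E C" using cyc unfolding cycle_def by auto
  have wA: "walk E A" unfolding A_def using walk_drop[OF walk_take[OF wC, of "Suc j"]] ij by simp
  have dA: "distinct A" unfolding A_def using dC by simp
  have hA: "hd A = C ! i" unfolding A_def using ij by (simp add: hd_drop_conv_nth)
  have lA: "last A = C ! j" unfolding A_def using ij by (simp add: last_conv_nth)
  have lenA: "length A = Suc j - i" unfolding A_def using ij by simp
  have "length Q' < length A" using lenA Q'(5) lQ ij by linarith
  then have "A \<noteq> Q'" by auto
  then obtain C2 where C2: "cycle E C2" "length C2 + 2 \<le> length A + length Q'"
    using two_paths_cycle[OF wA Q'(1) dA Q'(2)] hA lA Q'(3,4) wQ(2,3) by auto
  have "set C2 \<subseteq> V" using cycle_set[OF C2(1) EV] .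
  then have "girth V E \<le> enat (length C2)" using girth_le_cycle[OF C2(1)] by blast
  moreover have "length C2 \<le> j - i + length Q - 1" using C2(2) lenA Q'(5) ij by linarith
  ultimately show ?thesis by (meson enat_ord_simps(1) order_trans)
qed

context wtree
begin

lemma arc_near:
  assumes "Suc i < length (map Q [lo..<Suc hi])"
    "z \<in> Bt (map Q [lo..<Suc hi] ! i) (map Q [lo..<Suc hi] ! Suc i)"
    "\<forall>m. lo \<le> m \<and> m < hi \<longrightarrow> d (Q m) (Q (Suc m)) < L"
    "\<forall>m. lo \<le> m \<and> m \<le> hi \<longrightarrow> Q m \<in> VT"
  shows "z \<in> VT \<and> (\<exists>u. lo \<le> u \<and> u \<le> hi \<and> d (Q u) z < L / 2)"
proof -
  have i: "lo + i < hi" using assms(1) by (simp del: upt_Suc)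
  have n1: "map Q [lo..<Suc hi] ! i = Q (lo + i)" using i by (simp del: upt_Suc)
  have n2: "map Q [lo..<Suc hi] ! Suc i = Q (Suc (lo + i))" using i by (simp del: upt_Suc)
  have V: "Q (lo + i) \<in> VT" "Q (Suc (lo + i)) \<in> VT" using assms(4) i by auto
  have "d (Q (lo + i)) (Q (Suc (lo + i))) < L" using assms(3) i by simp
  then have "d (Q (lo + i)) z < L / 2 \<or> d (Q (Suc (lo + i))) z < L / 2"
    using near[OF V] assms(2) n1 n2 by simp
  then have "\<exists>u. lo \<le> u \<and> u \<le> hi \<and> d (Q u) z < L / 2"
  proof
    assume "d (Q (lo + i)) z < L / 2" then show ?thesis using i by (intro exI[of _ "lo + i"]) simp
  next
    assume "d (Q (Suc (lo + i))) z < L / 2" then show ?thesis using i by (intro exI[of _ "Suc (lo + i)"]) simp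
  qed
  moreover have "z \<in> VT" using assms(2) n1 n2 tpath_set[OF V] unfolding Bt_def by auto
  ultimately show ?thesis by blast
qed

end


lemma no_short_cycle:
  assumes sg: "simple_graph V E" and wtt: "weighted_tree VT ET w" and nc: "non_contractive V E VT ET w f"
    and cyc: "cycle E C" and gE: "girth V E = enat g" and Ldef: "L = real g / 3 - 1"
    and short: "\<And>i. Suc i < length C \<Longrightarrow> tree_dist VT ET w (f (C ! i)) (f (C ! Suc i)) < L"
    and closing: "tree_dist VT ET w (f (last C)) (f (hd C)) < L"
  shows False
proof -
  interpret wtree VT ET w by (rule wtree.intro[OF wtt])
  define k where "k = length C"
  define q where "q i = f (C ! i)" for i
  have EV: "\<forall>e\<in>E. e \<subseteq> V"
  proof
    fix e assume "e \<in> E"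
    then obtain x y where "x \<in> V" "y \<in> V" "e = {x, y}" using sg unfolding simple_graph_def by meson
    then show "e \<subseteq> V" by simp
  qed
  have CV: "set C \<subseteq> V" using cycle_set[OF cyc EV] .
  have CiV: "C ! i \<in> V" if "i < k" for i using CV that unfolding k_def by (meson nth_mem subsetD)
  have qV: "q i \<in> VT" if "i < k" for i
    using nc CiV[OF that] unfolding non_contractive_def q_def by blast
  have k3: "3 \<le> k" using cyc unfolding cycle_def k_def by simp
  have "enat g \<le> enat k" using girth_le_cycle[OF cyc CV] gE unfolding k_def by simp
  then have gk: "g \<le> k" by simp
  have "3 \<le> enat g" using girth_ge3[of V E] gE by simp
  then have g3: "3 \<le> g" by (simp add: numeral_eq_enat)
  have L0: "0 \<le> L" using g3 Ldef by simp
  have DI: "real (j - i) < L \<or> real g - L < real (j - i)"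
    if ij: "i < j" "j < k" and dl: "d (q i) (q j) < L" for i j
  proof -
    have iV: "C ! i \<in> V" "C ! j \<in> V" using CiV ij by auto
    have le: "ereal_of_enat (graph_dist V E (C ! i) (C ! j)) \<le> ereal (d (q i) (q j))"
      using nc iV unfolding non_contractive_def q_def by blast
    define S where "S = {enat (length xs - 1) |xs. walk E xs \<and> set xs \<subseteq> V \<and> hd xs = C ! i \<and> last xs = C ! j}"
    have gd: "graph_dist V E (C ! i) (C ! j) = Inf S" unfolding graph_dist_def S_def by simp
    have "S \<noteq> {}"
    proof
      assume "S = {}"
      then have "graph_dist V E (C ! i) (C ! j) = \<infinity>" using gd by (simp add: Inf_enat_def)
      then show False using le by simp
    qed
    then obtain s0 where "s0 \<in> S" by blast
    then have "Inf S \<in> S" by (rule wellorder_InfI)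
    then obtain Q where Q: "Inf S = enat (length Q - 1)" "walk E Q" "hd Q = C ! i" "last Q = C ! j"
      unfolding S_def by blast
    have "ereal (real (length Q - 1)) \<le> ereal (d (q i) (q j))" using le gd Q(1) by simp
    then have lq: "real (length Q - 1) < L" using dl by simp
    show ?thesis
    proof (cases "j - i \<le> length Q - 1")
      case True then show ?thesis using lq by linarith
    next
      case False
      then have "length Q < Suc (j - i)" by linarith
      then have "girth V E \<le> enat (j - i + length Q - 1)"
        using girth_bound[OF EV cyc ij(1) _ Q(2,3,4)] ij unfolding k_def by simp
      then have "g \<le> j - i + length Q - 1" using gE by simp
      moreover have "Q \<noteq> []" using Q(2) by auto
      ultimately have "real g \<le> real (j - i) + real (length Q - 1)" by linarith
      then show ?thesis using lq by linarith
    qed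
  qed
  have stepL: "d (q m) (q (Suc m)) < L" if "Suc m < k" for m
    using short[of m] that unfolding q_def k_def by simp
  have clos: "d (q 0) (q (k - 1)) < L"
  proof -
    have Cne: "C \<noteq> []" using k3 unfolding k_def by auto
    have "last C = C ! (k - 1)" unfolding k_def using Cne by (rule last_conv_nth)
    moreover have "hd C = C ! 0" using Cne by (rule hd_conv_nth)
    ultimately have "d (q (k - 1)) (q 0) < L" using closing unfolding q_def by simp
    moreover have "0 < k" "k - 1 < k" using k3 by auto
    ultimately show ?thesis using td_sym[OF qV[of 0] qV[of "k - 1"]] by simp
  qed
  define LS where "LS = {p. fst p < snd p \<and> snd p < k \<and> L \<le> real (snd p - fst p) \<and> d (q (fst p)) (q (snd p)) < L}"
  have p0: "(0, k - 1) \<in> LS"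
  proof -
    have "L \<le> real (k - 1)" using Ldef gk k3 by (simp add: of_nat_diff)
    then show ?thesis unfolding LS_def using k3 clos by simp
  qed
  obtain p where p: "p \<in> LS" and pmin: "\<And>p'. p' \<in> LS \<Longrightarrow> snd p - fst p \<le> snd p' - fst p'"
    using Lattices_Big.ex_has_least_nat[of "\<lambda>p. p \<in> LS" "(0, k - 1)" "\<lambda>p. snd p - fst p", OF p0] by blast
  define a where "a = fst p"
  define b where "b = snd p"
  have ab: "a < b" "b < k" "L \<le> real (b - a)" "d (q a) (q b) < L" using p unfolding LS_def a_def b_def by auto
  have PF: "real (j - i) < L" if "a \<le> i" "i < j" "j \<le> b" "(i, j) \<noteq> (a, b)" "d (q i) (q j) < L" for i j
  proof (rule ccontr)
    assume "\<not> real (j - i) < L"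
    then have "(i, j) \<in> LS" unfolding LS_def using that ab by simp
    then have "b - a \<le> j - i" using pmin unfolding a_def b_def by fastforce
    moreover have "j - i < b - a" using that by auto
    ultimately show False by simp
  qed
  have gap: "real g - L < real (b - a)" using DI[OF ab(1) ab(2) ab(4)] ab(3) by linarith
  define r where "r = max 1 (nat \<lceil>L\<rceil>)"
  have r1: "1 \<le> r" unfolding r_def by simp
  have rL: "L \<le> real r" unfolding r_def by linarith
  have rle: "real r \<le> L + 1" unfolding r_def using L0 by linarith
  have ab2: "a + 2 * r < b" using gap rle Ldef by linarith
  define Q where "Q m = (if m = Suc b then q a else q m)" for m
  have Qq: "Q m = q m" if "m \<le> b" for m using that unfolding Q_def by simp
  have QV: "Q m \<in> VT" if "m \<le> Suc b" for m
    using that ab qV unfolding Q_def by (cases "m = Suc b") auto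
  have Qstep: "d (Q m) (Q (Suc m)) < L" if "m < Suc b" for m
  proof (cases "m = b")
    case True
    then have "d (Q m) (Q (Suc m)) = d (q b) (q a)" unfolding Q_def by simp
    also have "\<dots> = d (q a) (q b)" using td_sym[OF qV[of a] qV[of b]] ab by simp
    finally show ?thesis using ab(4) by simp
  next
    case False
    then have "Suc m \<le> b" using that by simp
    then show ?thesis using stepL[of m] ab(2) Qq[of m] Qq[of "Suc m"] by simp
  qed
  define s1 where "s1 = map Q [a..<Suc (a + r)]"
  define s2 where "s2 = map Q [a + r..<Suc (a + 2 * r)]"
  define s3 where "s3 = map Q [a + 2 * r..<Suc (Suc b)]"
  have H: "\<exists>z. (\<exists>i. Suc i < length s1 \<and> z \<in> Bt (s1 ! i) (s1 ! Suc i))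
      \<and> (\<exists>i. Suc i < length s2 \<and> z \<in> Bt (s2 ! i) (s2 ! Suc i))
      \<and> (\<exists>i. Suc i < length s3 \<and> z \<in> Bt (s3 ! i) (s3 ! Suc i))"
  proof (rule helly3)
    show "set s1 \<subseteq> VT" unfolding s1_def using QV ab2 by auto
    show "set s2 \<subseteq> VT" unfolding s2_def using QV ab2 by auto
    show "set s3 \<subseteq> VT" unfolding s3_def using QV ab2 by auto
    show "2 \<le> length s1" unfolding s1_def using r1 by (simp del: upt_Suc)
    show "2 \<le> length s2" unfolding s2_def using r1 by (simp del: upt_Suc)
    show "2 \<le> length s3" unfolding s3_def using ab2 by (simp del: upt_Suc)
    show "last s1 = hd s2" unfolding s1_def s2_def by (simp del: upt_Suc add: last_map hd_map)
    show "last s2 = hd s3" unfolding s2_def s3_def using ab2 by (simp del: upt_Suc add: last_map hd_map)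
    show "last s3 = hd s1" unfolding s3_def s1_def using ab2 by (simp del: upt_Suc add: last_map hd_map Q_def)
  qed
  then obtain z i1 i2 i3 where z1: "Suc i1 < length s1" "z \<in> Bt (s1 ! i1) (s1 ! Suc i1)"
    and z2: "Suc i2 < length s2" "z \<in> Bt (s2 ! i2) (s2 ! Suc i2)"
    and z3: "Suc i3 < length s3" "z \<in> Bt (s3 ! i3) (s3 ! Suc i3)" by blast
  have A1: "z \<in> VT \<and> (\<exists>u. a \<le> u \<and> u \<le> a + r \<and> d (Q u) z < L / 2)"
    using arc_near[of i1 Q a "a + r" z L] z1 Qstep QV ab2 unfolding s1_def by simp
  have A2: "\<exists>u. a + r \<le> u \<and> u \<le> a + 2 * r \<and> d (Q u) z < L / 2"
    using arc_near[of i2 Q "a + r" "a + 2 * r" z L] z2 Qstep QV ab2 unfolding s2_def by simp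
  have A3: "\<exists>u. a + 2 * r \<le> u \<and> u \<le> Suc b \<and> d (Q u) z < L / 2"
    using arc_near[of i3 Q "a + 2 * r" "Suc b" z L] z3 Qstep QV ab2 unfolding s3_def by simp
  have zV: "z \<in> VT" using A1 by blast
  obtain u1 where u1: "a \<le> u1" "u1 \<le> a + r" "d (Q u1) z < L / 2" using A1 by blast
  obtain u2 where u2: "a + r \<le> u2" "u2 \<le> a + 2 * r" "d (Q u2) z < L / 2" using A2 by blast
  obtain u3 where u3: "a + 2 * r \<le> u3" "u3 \<le> Suc b" "d (Q u3) z < L / 2" using A3 by blast
  have close: "d (Q u) (Q u') < L" if "u \<le> Suc b" "u' \<le> Suc b" "d (Q u) z < L / 2" "d (Q u') z < L / 2" for u u'
  proof -
    have "d (Q u) (Q u') \<le> d (Q u) z + d z (Q u')" using td_tri[OF QV[OF that(1)] zV QV[OF that(2)]] .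
    moreover have "d z (Q u') = d (Q u') z" using td_sym[OF QV[OF that(2)] zV] by simp
    ultimately show ?thesis using that by linarith
  qed
  have key: False if "d (q a) (q u2) < L"
  proof -
    have "real (u2 - a) < L" using PF[of a u2] that u2 ab2 r1 by simp
    moreover have "r \<le> u2 - a" using u2 by simp
    ultimately show False using rL by linarith
  qed
  show False
  proof (cases "u3 = Suc b")
    case True
    have "d (Q u3) (Q u2) < L" using close[of u3 u2] u3 u2 ab2 by simp
    then have "d (q a) (q u2) < L" using True Qq[of u2] u2 ab2 td_sym[OF qV[of u2] qV[of a]] ab unfolding Q_def by simp
    then show False by (rule key)
  next
    case False
    then have u3b: "u3 \<le> b" using u3 by simp
    have "d (Q u1) (Q u3) < L" using close[of u1 u3] u1 u3 ab2 by simp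
    then have d13: "d (q u1) (q u3) < L" using Qq[of u1] Qq[of u3] u1 u3b ab2 by simp
    show False
    proof (cases "(u1, u3) = (a, b)")
      case True
      have "d (Q u1) (Q u2) < L" using close[of u1 u2] u1 u2 ab2 by simp
      then have "d (q a) (q u2) < L" using True Qq[of u1] Qq[of u2] u2 ab2 by simp
      then show False by (rule key)
    next
      case False
      have "real (u3 - u1) < L" using PF[of u1 u3] False d13 u1 u3 u3b r1 by simp
      moreover have "r \<le> u3 - u1" using u1 u3 by simp
      ultimately show False using rL by linarith
    qed
  qed
qed



theorem lemma5p3:
  fixes V :: "'a set" and E :: "'a set set"
    and VT :: "'b set" and ET :: "'b set set" and w :: "'b set \<Rightarrow> real" and f :: "'a \<Rightarrow> 'b"
  assumes "simple_graph V E"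
    and "E \<noteq> {}"
    and "weighted_tree VT ET w"
    and "non_contractive V E VT ET w f"
  shows "measure_pmf.prob (pmf_of_set E)
           {e \<in> E. \<exists>x y. e = {x, y} \<and>
              ereal (tree_dist VT ET w (f x) (f y)) \<ge> ereal_of_enat (girth V E) / 3 - 1}
         \<ge> (real (card E) - (real (card V) - 1)) / real (card E)"
proof -
  note sg = assms(1) and wtt = assms(3) and nc = assms(4)
  have finV: "finite V" using sg unfolding simple_graph_def by blast
  have EV: "\<forall>e\<in>E. e \<subseteq> V"
  proof
    fix e assume "e \<in> E"
    then obtain x y where "x \<in> V" "y \<in> V" "e = {x, y}" using sg unfolding simple_graph_def by meson
    then show "e \<subseteq> V" by simp
  qed
  have finE: "finite E"
  proof -
    have "E \<subseteq> Pow V" using EV by auto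
    then show ?thesis using finV finite_subset by auto
  qed
  define thr where "thr = ereal_of_enat (girth V E) / 3 - 1"
  define S where "S = {e \<in> E. \<exists>x y. e = {x, y} \<and> ereal (tree_dist VT ET w (f x) (f y)) \<ge> thr}"
  define E' where "E' = E - S"
  have notS: "tree_dist VT ET w (f x) (f y) < L" if "{x, y} \<in> E'" "thr = ereal L" for x y L
  proof -
    have "\<not> (ereal (tree_dist VT ET w (f x) (f y)) \<ge> thr)" using that(1) unfolding E'_def S_def by auto
    then show ?thesis using that(2) by simp
  qed
  have acyc: "\<not> (\<exists>C. cycle E' C)"
  proof
    assume "\<exists>C. cycle E' C"
    then obtain C where cE': "cycle E' C" by blast
    have cyc: "cycle E C" using cycle_mono[OF cE'] unfolding E'_def by auto
    have "set C \<subseteq> V" using cycle_set[OF cyc EV] .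
    then have gle: "girth V E \<le> enat (length C)" using girth_le_cycle[OF cyc] by simp
    then obtain g where gE: "girth V E = enat g" by (cases "girth V E") auto
    define L where "L = real g / 3 - 1"
    have thrL: "thr = ereal L" unfolding thr_def L_def gE by (simp add: one_ereal_def)
    have wC: "walk E' C" and cl: "{last C, hd C} \<in> E'" using cE' unfolding cycle_def by auto
    show False
    proof (rule no_short_cycle[OF sg wtt nc cyc gE L_def])
      fix i assume "Suc i < length C"
      then have "{C ! i, C ! Suc i} \<in> E'" using walk_edge[OF wC] by simp
      then show "tree_dist VT ET w (f (C ! i)) (f (C ! Suc i)) < L" using notS thrL by blast
    next
      show "tree_dist VT ET w (f (last C)) (f (hd C)) < L" using notS[OF cl thrL] .
    qed
  qed
  have Vne: "V \<noteq> {}"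
  proof -
    obtain e where "e \<in> E" using assms(2) by blast
    then obtain x y where "x \<in> V" "e = {x, y}" using sg unfolding simple_graph_def by meson
    then show ?thesis by blast
  qed
  have E'g: "\<forall>e\<in>E'. \<exists>x y. x \<noteq> y \<and> x \<in> V \<and> y \<in> V \<and> e = {x, y}"
    using sg unfolding simple_graph_def E'_def by blast
  have cE': "card E' \<le> card V - 1" using forest_card[OF finV E'g acyc Vne] .
  have SE: "S \<subseteq> E" unfolding S_def by blast
  have cS: "card E' = card E - card S" unfolding E'_def using card_Diff_subset[OF finite_subset[OF SE finE] SE] .
  have cSE: "card S \<le> card E" using card_mono[OF finE SE] .
  have cV1: "1 \<le> card V" using Vne finV by (simp add: Suc_le_eq card_gt_0_iff)
  have cE0: "0 < card E" using assms(2) finE by (simp add: card_gt_0_iff)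
  have "measure_pmf.prob (pmf_of_set E) S = real (card (E \<inter> S)) / real (card E)"
    using measure_pmf_of_set[OF assms(2) finE] .
  also have "E \<inter> S = S" using SE by blast
  finally have pr: "measure_pmf.prob (pmf_of_set E) S = real (card S) / real (card E)" by simp
  have "real (card E) - (real (card V) - 1) \<le> real (card S)"
    using cE' cS cSE cV1 by linarith
  then have "(real (card E) - (real (card V) - 1)) / real (card E) \<le> real (card S) / real (card E)"
    using cE0 by (simp add: divide_right_mono)
  then show ?thesis using pr unfolding S_def thr_def by simp
qed

end
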